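(* Suppose $G=(V,E)$ is a complete graph whose nonnegative edge costs $c$ satisfy the triangle inequality, and let $R\subseteq V$ be the terminal set. Then the cost of a minimum spanning tree of the induced subgraph $G[R]$ is at most twice the optimal value of the hypergraphic LP \[ \min \sum_K C_K x_K \quad\text{s.t.}\quad \sum_{K:\,K\cap S\neq\varnothing} x_K(|K\cap S|-1)\le |S|-1\ \ \forall\, \varnothing\neq S\subseteq R,\quad \sum_K x_K(|K|-1)=|R|-1,\quad x\ge 0. \]
   Context: For $K\subseteq R$ with $|K|\ge2$, a full component on $K$ is a tree in $G$ whose leaf set is exactly $K$ and whose internal vertices all lie in $V\setminus R$; $C_K$ is the minimum cost of a full component on $K$, and the LP variables $x_K$ range over such $K$ for which a full component exists. *)

theory Defs
  imports Complex_Main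
begin

definition edges_of :: "'a set \<Rightarrow> 'a set set" where
  "edges_of W = {{u, v} | u v. u \<in> W \<and> v \<in> W \<and> u \<noteq> v}"

definition adj :: "'a set set \<Rightarrow> ('a \<times> 'a) set" where
  "adj F = {(u, v). {u, v} \<in> F}"

definition deg :: "'a set set \<Rightarrow> 'a \<Rightarrow> nat" where
  "deg F v = card {e \<in> F. v \<in> e}"

definition is_tree :: "'a set \<Rightarrow> 'a set set \<Rightarrow> bool" where
  "is_tree W F \<longleftrightarrow> finite W \<and> F \<subseteq> edges_of W \<and> card F = card W - 1 \<and>
     (\<forall>u\<in>W. \<forall>v\<in>W. (u, v) \<in> (adj F)\<^sup>*)"

definition cost :: "('a set \<Rightarrow> real) \<Rightarrow> 'a set set \<Rightarrow> real" where
  "cost c F = (\<Sum>e\<in>F. c e)"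

definition full_component :: "'a set \<Rightarrow> 'a set \<Rightarrow> 'a set \<Rightarrow> 'a set \<Rightarrow> 'a set set \<Rightarrow> bool" where
  "full_component V R K W F \<longleftrightarrow> W \<subseteq> V \<and> is_tree W F \<and>
     {v \<in> W. deg F v = 1} = K \<and> W - K \<subseteq> V - R"

definition has_full_component :: "'a set \<Rightarrow> 'a set \<Rightarrow> 'a set \<Rightarrow> bool" where
  "has_full_component V R K \<longleftrightarrow> (\<exists>W F. full_component V R K W F)"

definition fc_cost :: "'a set \<Rightarrow> 'a set \<Rightarrow> ('a set \<Rightarrow> real) \<Rightarrow> 'a set \<Rightarrow> real" where
  "fc_cost V R c K = Min {cost c F | W F. full_component V R K W F}"

definition lp_index :: "'a set \<Rightarrow> 'a set \<Rightarrow> 'a set set" where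
  "lp_index V R = {K. K \<subseteq> R \<and> 2 \<le> card K \<and> has_full_component V R K}"

definition hyp_feasible :: "'a set \<Rightarrow> 'a set \<Rightarrow> ('a set \<Rightarrow> real) \<Rightarrow> bool" where
  "hyp_feasible V R x \<longleftrightarrow>
     (\<forall>K\<in>lp_index V R. 0 \<le> x K) \<and>
     (\<forall>S. S \<subseteq> R \<and> S \<noteq> {} \<longrightarrow>
        (\<Sum>K\<in>{K \<in> lp_index V R. K \<inter> S \<noteq> {}}. x K * (real (card (K \<inter> S)) - 1))
          \<le> real (card S) - 1) \<and>
     (\<Sum>K\<in>lp_index V R. x K * (real (card K) - 1)) = real (card R) - 1"

definition hyp_objective :: "'a set \<Rightarrow> 'a set \<Rightarrow> ('a set \<Rightarrow> real) \<Rightarrow> ('a set \<Rightarrow> real) \<Rightarrow> real" where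
  "hyp_objective V R c x = (\<Sum>K\<in>lp_index V R. fc_cost V R c K * x K)"

definition mst_cost :: "'a set \<Rightarrow> ('a set \<Rightarrow> real) \<Rightarrow> real" where
  "mst_cost R c = Min {cost c F | F. is_tree R F}"

end

theory Submission
  imports Defs
begin


lemma edges_of_sub: "edges_of S \<subseteq> Pow S" by (auto simp: edges_of_def)
lemma finite_edges_of: "finite S \<Longrightarrow> finite (edges_of S)"
  by (rule finite_subset[OF edges_of_sub]) simp
lemma edges_of_mono: "A \<subseteq> B \<Longrightarrow> edges_of A \<subseteq> edges_of B"
  unfolding edges_of_def by blast
lemma in_edges_of: "{a,b} \<in> edges_of S \<longleftrightarrow> a\<in>S \<and> b\<in>S \<and> a\<noteq>b"
  unfolding edges_of_def by (auto simp: doubleton_eq_iff)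
lemma edges_ofE: "e \<in> edges_of S \<Longrightarrow> (\<And>a b. e = {a,b} \<Longrightarrow> a\<in>S \<Longrightarrow> b\<in>S \<Longrightarrow> a\<noteq>b \<Longrightarrow> P) \<Longrightarrow> P"
  unfolding edges_of_def by blast
lemma adj_sym: "(u,v) \<in> adj F \<longleftrightarrow> (v,u) \<in> adj F"
  by (auto simp: adj_def insert_commute)
lemma adj_mono: "F \<subseteq> G \<Longrightarrow> (adj F)\<^sup>* \<subseteq> (adj G)\<^sup>*"
  by (rule rtrancl_mono) (auto simp: adj_def)

lemma tree_single: "is_tree {a} {}"
  by (auto simp: is_tree_def)

lemma cross_edge:
  assumes "(u,v) \<in> r\<^sup>*" "u \<in> A" "v \<notin> A"
  shows "\<exists>a b. (a,b) \<in> r \<and> a \<in> A \<and> b \<notin> A"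
  using assms by (induction rule: rtrancl_induct) auto

lemma tree_join:
  assumes TA: "is_tree A FA" and TB: "is_tree B FB" and d: "A \<inter> B = {}"
    and a: "a \<in> A" and b: "b \<in> B"
  shows "is_tree (A \<union> B) (insert {a,b} (FA \<union> FB))"
    "cost c (insert {a,b} (FA \<union> FB)) = c {a,b} + cost c FA + cost c FB"
proof -
  have fA: "finite A" and sA: "FA \<subseteq> edges_of A" and cA: "card FA = card A - 1"
    and conA: "\<forall>u\<in>A. \<forall>v\<in>A. (u,v) \<in> (adj FA)\<^sup>*" using TA by (auto simp: is_tree_def)
  have fB: "finite B" and sB: "FB \<subseteq> edges_of B" and cB: "card FB = card B - 1"
    and conB: "\<forall>u\<in>B. \<forall>v\<in>B. (u,v) \<in> (adj FB)\<^sup>*" using TB by (auto simp: is_tree_def)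
  have ffA: "finite FA" using sA finite_edges_of[OF fA] finite_subset by blast
  have ffB: "finite FB" using sB finite_edges_of[OF fB] finite_subset by blast
  have dAB: "FA \<inter> FB = {}"
  proof -
    { fix e assume "e \<in> FA" "e \<in> FB"
      then have "e \<in> edges_of A" "e \<in> edges_of B" using sA sB by auto
      then have "e \<subseteq> A" "e \<subseteq> B" "e \<noteq> {}" by (auto elim: edges_ofE)
      with d have False by blast }
    then show ?thesis by blast
  qed
  have nab: "{a,b} \<notin> FA \<union> FB"
  proof
    assume "{a,b} \<in> FA \<union> FB"
    then have "{a,b} \<subseteq> A \<or> {a,b} \<subseteq> B" using sA sB edges_of_sub by blast
    with a b d show False by blast
  qed
  let ?F = "insert {a,b} (FA \<union> FB)"
  have cardF: "card ?F = card FA + card FB + 1"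
    using nab dAB ffA ffB by (simp add: card_Un_disjoint)
  have "card A \<ge> 1" "card B \<ge> 1" using a b fA fB
    by (auto simp: Suc_le_eq card_gt_0_iff)
  moreover have "card (A \<union> B) = card A + card B" using fA fB d by (simp add: card_Un_disjoint)
  ultimately have card_ok: "card ?F = card (A \<union> B) - 1" using cardF cA cB by simp
  have "{a,b} \<in> edges_of (A \<union> B)" using a b d by (auto simp: in_edges_of)
  moreover have "FA \<subseteq> edges_of (A \<union> B)" using sA edges_of_mono[of A "A\<union>B"] by blast
  moreover have "FB \<subseteq> edges_of (A \<union> B)" using sB edges_of_mono[of B "A\<union>B"] by blast
  ultimately have sub: "?F \<subseteq> edges_of (A \<union> B)" by blast
  have mA: "(adj FA)\<^sup>* \<subseteq> (adj ?F)\<^sup>*" by (rule adj_mono) auto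
  have mB: "(adj FB)\<^sup>* \<subseteq> (adj ?F)\<^sup>*" by (rule adj_mono) auto
  have ab: "(a,b) \<in> (adj ?F)\<^sup>*" by (rule r_into_rtrancl) (auto simp: adj_def)
  have ba: "(b,a) \<in> (adj ?F)\<^sup>*" by (rule r_into_rtrancl) (auto simp: adj_def insert_commute)
  have con: "\<forall>u\<in>A\<union>B. \<forall>v\<in>A\<union>B. (u,v) \<in> (adj ?F)\<^sup>*"
  proof (intro ballI)
    fix u v assume u: "u \<in> A \<union> B" and v: "v \<in> A \<union> B"
    have ua: "u \<in> A \<Longrightarrow> (u,a) \<in> (adj ?F)\<^sup>*" using conA a by (intro subsetD[OF mA]) blast
    have au: "u \<in> A \<Longrightarrow> (a,u) \<in> (adj ?F)\<^sup>*" using conA a by (intro subsetD[OF mA]) blast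
    have ub: "u \<in> B \<Longrightarrow> (u,b) \<in> (adj ?F)\<^sup>*" using conB b by (intro subsetD[OF mB]) blast
    have bu: "u \<in> B \<Longrightarrow> (b,u) \<in> (adj ?F)\<^sup>*" using conB b by (intro subsetD[OF mB]) blast
    have va: "v \<in> A \<Longrightarrow> (a,v) \<in> (adj ?F)\<^sup>*" using conA a by (intro subsetD[OF mA]) blast
    have vb: "v \<in> B \<Longrightarrow> (b,v) \<in> (adj ?F)\<^sup>*" using conB b by (intro subsetD[OF mB]) blast
    show "(u,v) \<in> (adj ?F)\<^sup>*"
    proof (cases "u \<in> A")
      case True
      show ?thesis
      proof (cases "v \<in> A")
        case True with \<open>u\<in>A\<close> show ?thesis using ua va by (meson rtrancl_trans)
      next
        case False then have "v \<in> B" using v by blast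
        with \<open>u\<in>A\<close> show ?thesis using ua vb ab by (meson rtrancl_trans)
      qed
    next
      case False then have uB: "u \<in> B" using u by blast
      show ?thesis
      proof (cases "v \<in> A")
        case True with uB show ?thesis using ub va ba by (meson rtrancl_trans)
      next
        case False then have "v \<in> B" using v by blast
        with uB show ?thesis using ub vb by (meson rtrancl_trans)
      qed
    qed
  qed
  show "is_tree (A \<union> B) ?F" unfolding is_tree_def using fA fB sub card_ok con by (intro conjI) simp_all
  show "cost c ?F = c {a,b} + cost c FA + cost c FB"
  proof -
    have "cost c ?F = c {a,b} + cost c (FA \<union> FB)"
      unfolding cost_def using nab ffA ffB by simp
    moreover have "cost c (FA \<union> FB) = cost c FA + cost c FB"
      unfolding cost_def by (rule sum.union_disjoint[OF ffA ffB dAB])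
    ultimately show ?thesis by simp
  qed
qed

lemma merge_family:
  assumes "finite CC" "card CC = n" "n \<ge> 1" "\<Union>CC = S" "\<forall>C\<in>CC. C \<noteq> {}"
    "\<forall>A\<in>CC. \<forall>B\<in>CC. A \<noteq> B \<longrightarrow> A \<inter> B = {}"
    "\<forall>C\<in>CC. is_tree C (T C)"
    "\<forall>u\<in>S. \<forall>v\<in>S. (u,v) \<in> r\<^sup>*" "r \<subseteq> S \<times> S" "\<forall>(a,b)\<in>r. c {a,b} \<le> M"
  shows "\<exists>F. is_tree S F \<and> cost c F \<le> (\<Sum>C\<in>CC. cost c (T C)) + (real n - 1) * M"
  using assms
proof (induction n arbitrary: CC T)
  case 0 then show ?case by simp
next
  case (Suc m)
  show ?case
  proof (cases "m = 0")
    case True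
    have "card CC = 1" using Suc.prems True by simp
    then obtain C where CC: "CC = {C}" by (rule card_1_singletonE)
    then have CS: "C = S" using Suc.prems by auto
    have "is_tree S (T C)" using Suc.prems CC CS by auto
    moreover have "cost c (T C) \<le> (\<Sum>C\<in>CC. cost c (T C)) + (real (Suc m) - 1) * M"
      using CC True by simp
    ultimately show ?thesis by blast
  next
    case False
    have fin: "finite CC" and dis: "\<forall>A\<in>CC. \<forall>B\<in>CC. A \<noteq> B \<longrightarrow> A \<inter> B = {}"
      and ne: "\<forall>C\<in>CC. C \<noteq> {}" and US: "\<Union>CC = S" and TT: "\<forall>C\<in>CC. is_tree C (T C)"
      and rS: "r \<subseteq> S \<times> S" and rM: "\<forall>(a,b)\<in>r. c {a,b} \<le> M"
      and conn: "\<forall>u\<in>S. \<forall>v\<in>S. (u,v) \<in> r\<^sup>*" using Suc.prems by auto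
    have c2: "card CC \<ge> 2" using Suc.prems False by auto
    then obtain C1 where C1: "C1 \<in> CC" using card_gt_0_iff[of CC] by fastforce
    have "CC - {C1} \<noteq> {}"
    proof
      assume "CC - {C1} = {}" then have "CC = {C1}" using C1 by blast
      then show False using c2 by simp
    qed
    then obtain C' where C': "C' \<in> CC" "C' \<noteq> C1" by blast
    obtain u where u: "u \<in> C1" using ne C1 by blast
    obtain v where v: "v \<in> C'" using ne C' by blast
    have "C' \<inter> C1 = {}" using dis[rule_format, OF C'(1) C1 C'(2)] .
    then have vn: "v \<notin> C1" using v by blast
    have uS: "u \<in> S" using US u C1 by blast
    have vS: "v \<in> S" using US v C' by blast
    have "(u,v) \<in> r\<^sup>*" using conn uS vS by blast
    then obtain a b where ab: "(a,b) \<in> r" "a \<in> C1" "b \<notin> C1"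
      using cross_edge[of u v r C1] u vn by blast
    have "b \<in> S" using ab rS by blast
    then have "b \<in> \<Union>CC" using US by simp
    then obtain C2 where C2: "C2 \<in> CC" "b \<in> C2" by (rule UnionE)
    have C12: "C2 \<noteq> C1" using C2 ab by blast
    have d12: "C1 \<inter> C2 = {}" using dis[rule_format, OF C1 C2(1) not_sym[OF C12]] .
    define D where "D = CC - {C1, C2}"
    define CC' where "CC' = insert (C1 \<union> C2) D"
    define T' where "T' = T(C1 \<union> C2 := insert {a,b} (T C1 \<union> T C2))"
    have finD: "finite D" using fin D_def by simp
    have nD: "C1 \<union> C2 \<notin> D"
    proof
      assume "C1 \<union> C2 \<in> D"
      then have "C1 \<union> C2 \<in> CC" "C1 \<union> C2 \<noteq> C1" unfolding D_def by simp_all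
      then have "(C1 \<union> C2) \<inter> C1 = {}" using dis[rule_format, of "C1 \<union> C2" C1] C1 by simp
      then show False using u by blast
    qed
    have "card D = card CC - card {C1,C2}" unfolding D_def
      by (rule card_Diff_subset) (use C1 C2 in auto)
    moreover have "card {C1,C2} = 2" using C12 by simp
    ultimately have cardD: "card D = card CC - 2" by simp
    have cCC: "card CC = Suc m" using Suc.prems(2) .
    have "card CC' = Suc (card D)" unfolding CC'_def using finD nD by simp
    then have cardCC': "card CC' = m" using cardD cCC c2 by simp
    have sumCC: "(\<Sum>C\<in>CC. cost c (T C)) = cost c (T C1) + cost c (T C2) + (\<Sum>C\<in>D. cost c (T C))"
    proof -
      have "CC = insert C1 (insert C2 D)" using D_def C1 C2 by blast
      moreover have "C1 \<notin> insert C2 D" "C2 \<notin> D" using D_def C12 by auto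
      ultimately show ?thesis using finD by simp
    qed
    have sumCC': "(\<Sum>C\<in>CC'. cost c (T' C)) = cost c (insert {a,b} (T C1 \<union> T C2)) + (\<Sum>C\<in>D. cost c (T C))"
    proof -
      have "(\<Sum>C\<in>D. cost c (T' C)) = (\<Sum>C\<in>D. cost c (T C))"
        by (rule sum.cong) (use nD T'_def in auto)
      then show ?thesis unfolding CC'_def using finD nD T'_def by simp
    qed
    have j: "is_tree (C1 \<union> C2) (insert {a,b} (T C1 \<union> T C2))"
      "cost c (insert {a,b} (T C1 \<union> T C2)) = c {a,b} + cost c (T C1) + cost c (T C2)"
      using tree_join(1)[of C1 "T C1" C2 "T C2" a b] tree_join(2)[of C1 "T C1" C2 "T C2" a b c]
        TT C1 C2 d12 ab by auto
    have DCC: "D \<subseteq> CC" unfolding D_def by blast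
    have IHa1: "finite CC'" unfolding CC'_def using finD by simp
    have IHa2: "\<Union>CC' = S"
    proof -
      have "CC = insert C1 (insert C2 D)" using D_def C1 C2 by blast
      then have "\<Union>CC = C1 \<union> C2 \<union> \<Union>D" by auto
      then show ?thesis unfolding CC'_def using US by auto
    qed
    have IHa3: "\<forall>C\<in>CC'. C \<noteq> {}" unfolding CC'_def using ne DCC u by auto
    have IHb: "\<forall>A\<in>CC'. \<forall>B\<in>CC'. A \<noteq> B \<longrightarrow> A \<inter> B = {}"
    proof (intro ballI impI)
      fix A B assume A: "A \<in> CC'" and B: "B \<in> CC'" and AB: "A \<noteq> B"
      have Dd: "X \<in> D \<Longrightarrow> X \<inter> (C1 \<union> C2) = {}" for X
      proof -
        assume X: "X \<in> D"
        then have "X \<in> CC" "X \<noteq> C1" "X \<noteq> C2" unfolding D_def by auto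
        then have "X \<inter> C1 = {}" "X \<inter> C2 = {}"
          using dis[rule_format, of X C1] dis[rule_format, of X C2] C1 C2(1) by simp_all
        then show ?thesis by blast
      qed
      show "A \<inter> B = {}"
      proof (cases "A = C1 \<union> C2")
        case True
        then have "B \<in> D" using B AB unfolding CC'_def by auto
        then show ?thesis using Dd True by blast
      next
        case False
        then have Ad: "A \<in> D" using A unfolding CC'_def by auto
        show ?thesis
        proof (cases "B = C1 \<union> C2")
          case True then show ?thesis using Dd Ad by blast
        next
          case False
          then have "B \<in> D" using B unfolding CC'_def by auto
          then show ?thesis using Ad AB dis[rule_format, of A B] DCC by blast
        qed
      qed
    qed
    have IHc: "\<forall>C\<in>CC'. is_tree C (T' C)"
    proof
      fix C assume C: "C \<in> CC'"
      show "is_tree C (T' C)"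
      proof (cases "C = C1 \<union> C2")
        case True then show ?thesis using j(1) unfolding T'_def by simp
      next
        case False
        then have "C \<in> CC" using C DCC unfolding CC'_def by auto
        then show ?thesis using TT False unfolding T'_def by simp
      qed
    qed
    obtain F where F: "is_tree S F" "cost c F \<le> (\<Sum>C\<in>CC'. cost c (T' C)) + (real m - 1) * M"
      using Suc.IH[OF IHa1 cardCC' _ IHa2 IHa3 IHb IHc conn rS rM] False by auto
    have "c {a,b} \<le> M" using rM ab by auto
    then have "cost c F \<le> (\<Sum>C\<in>CC. cost c (T C)) + (real (Suc m) - 1) * M"
      using F(2) sumCC sumCC' j(2) by (simp add: algebra_simps)
    then show ?thesis using F(1) by blast
  qed
qed


definition ltr :: "('a set \<Rightarrow> real) \<Rightarrow> 'a set \<Rightarrow> real \<Rightarrow> ('a \<times> 'a) set" where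
  "ltr c S M = {(a,b). a \<in> S \<and> b \<in> S \<and> a \<noteq> b \<and> c {a,b} \<le> M}"
definition conn :: "('a set \<Rightarrow> real) \<Rightarrow> 'a set \<Rightarrow> real \<Rightarrow> bool" where
  "conn c S M \<longleftrightarrow> (\<forall>u\<in>S. \<forall>v\<in>S. (u,v) \<in> (ltr c S M)\<^sup>*)"
definition Ysum :: "('a set \<Rightarrow> real) \<Rightarrow> 'a set \<Rightarrow> real" where
  "Ysum y S = (\<Sum>e\<in>edges_of S. y e)"
definition Zsum :: "('a set \<Rightarrow> real) \<Rightarrow> ('a set \<Rightarrow> real) \<Rightarrow> 'a set \<Rightarrow> real" where
  "Zsum c y S = (\<Sum>e\<in>edges_of S. y e * c e)"

lemma rtrancl_restrict:
  assumes "(u,v) \<in> r\<^sup>*" "u \<in> C" "\<And>a b. (a,b)\<in>r \<Longrightarrow> a\<in>C \<Longrightarrow> b\<in>C"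
  shows "(u,v) \<in> (r \<inter> C \<times> C)\<^sup>* \<and> v \<in> C"
  using assms(1)
proof (induction rule: rtrancl_induct)
  case base then show ?case using assms(2) by simp
next
  case (step y z)
  then have "z \<in> C" using assms(3) by blast
  with step show ?case by (meson IntI mem_Sigma_iff rtrancl.rtrancl_into_rtrancl)
qed

lemma edges_of_empty_single: "edges_of {a} = {}"
  unfolding edges_of_def by auto

lemma subtour_step:
  fixes S :: "'a set" and R :: "'a set" and y c :: "'a set \<Rightarrow> real"
  assumes SR: "S \<subseteq> R" and Sne: "S \<noteq> {}" and fR: "finite R"
    and ynn: "\<forall>e\<in>edges_of R. 0 \<le> y e"
    and cons: "\<forall>S. S \<subseteq> R \<and> S \<noteq> {} \<longrightarrow> Ysum y S \<le> real (card S) - 1"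
    and IH: "\<And>S' M'. card S' < card S \<Longrightarrow> S' \<subseteq> R \<Longrightarrow> S' \<noteq> {} \<Longrightarrow> conn c S' M' \<Longrightarrow>
       \<exists>T. is_tree S' T \<and> cost c T \<le> Zsum c y S' + (real (card S') - 1 - Ysum y S') * M'"
  shows "card {e\<in>edges_of S. c e < M} = n \<Longrightarrow> conn c S M \<Longrightarrow>
       \<exists>T. is_tree S T \<and> cost c T \<le> Zsum c y S + (real (card S) - 1 - Ysum y S) * M"
proof (induction n arbitrary: M rule: less_induct)
  case (less n M)
  have fS: "finite S" using SR fR finite_subset by blast
  have slack: "0 \<le> real (card S) - 1 - Ysum y S" using cons SR Sne by auto
  define rel where "rel = {(a,b). a \<in> S \<and> b \<in> S \<and> a \<noteq> b \<and> c {a,b} < M}"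
  define comp where "comp a = {b. (a,b) \<in> rel\<^sup>*}" for a
  have symr: "sym (rel\<^sup>*)" unfolding rel_def by (intro sym_rtrancl) (auto simp: sym_def insert_commute)
  have comp_sub: "comp a \<subseteq> S" if "a \<in> S" for a
  proof
    fix b assume "b \<in> comp a"
    then have "(a,b) \<in> rel\<^sup>*" by (simp add: comp_def)
    then show "b \<in> S" using that by (induction rule: rtrancl_induct) (auto simp: rel_def)
  qed
  have comp_self: "a \<in> comp a" for a by (simp add: comp_def)
  have comp_eq: "comp b = comp a" if "b \<in> comp a" for a b
  proof -
    have ab: "(a,b) \<in> rel\<^sup>*" using that by (simp add: comp_def)
    then have ba: "(b,a) \<in> rel\<^sup>*" using symr by (meson symD)
    show ?thesis unfolding comp_def using ab ba by (blast intro: rtrancl_trans)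
  qed
  have comp_closed: "b' \<in> comp a" if "b \<in> comp a" "(b,b') \<in> rel" for a b b'
    using that by (auto simp: comp_def intro: rtrancl_into_rtrancl)
  show ?case
  proof (cases "\<exists>a\<in>S. comp a = S")
    case True
    then obtain a0 where a0: "a0 \<in> S" "comp a0 = S" by blast
    have allrel: "(u,v) \<in> rel\<^sup>*" if "u \<in> S" "v \<in> S" for u v
    proof -
      have "(a0,u) \<in> rel\<^sup>*" "(a0,v) \<in> rel\<^sup>*" using a0 that by (auto simp: comp_def)
      then show ?thesis using symr by (meson symD rtrancl_trans)
    qed
    show ?thesis
    proof (cases "\<exists>e\<in>edges_of S. c e < M")
      case True
      define VV where "VV = {c e | e. e \<in> edges_of S \<and> c e < M}"
      have fVV: "finite VV" unfolding VV_def using finite_edges_of[OF fS] by simp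
      have neVV: "VV \<noteq> {}" unfolding VV_def using True by blast
      define M' where "M' = Max VV"
      have M'in: "M' \<in> VV" unfolding M'_def using fVV neVV by simp
      then have M'lt: "M' < M" unfolding VV_def by auto
      have leM': "c e \<le> M'" if "e \<in> edges_of S" "c e < M" for e
        unfolding M'_def using fVV that VV_def by (auto intro: Max_ge)
      have "rel \<subseteq> ltr c S M'"
        unfolding rel_def ltr_def using leM' by (auto simp: in_edges_of)
      then have connM': "conn c S M'" unfolding conn_def using allrel rtrancl_mono by blast
      obtain e0 where e0: "e0 \<in> edges_of S" "c e0 = M'" using M'in VV_def by auto
      have sub: "{e\<in>edges_of S. c e < M'} \<subset> {e\<in>edges_of S. c e < M}"
        using e0 M'lt by auto
      have "card {e\<in>edges_of S. c e < M'} < n"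
        using psubset_card_mono[OF _ sub] finite_edges_of[OF fS] less.prems(1) by auto
      then obtain T where T: "is_tree S T" "cost c T \<le> Zsum c y S + (real (card S) - 1 - Ysum y S) * M'"
        using less.IH connM' by blast
      have "(real (card S) - 1 - Ysum y S) * M' \<le> (real (card S) - 1 - Ysum y S) * M"
        using slack M'lt by (intro mult_left_mono) auto
      then show ?thesis using T by force
    next
      case False
      then have "rel = {}" unfolding rel_def by (auto simp: in_edges_of)
      then have "comp a0 = {a0}" unfolding comp_def by auto
      then have Sa: "S = {a0}" using a0 by simp
      have "is_tree S {}" using Sa tree_single by simp
      moreover have "cost c {} \<le> Zsum c y S + (real (card S) - 1 - Ysum y S) * M"
        by (simp add: Sa cost_def Zsum_def Ysum_def edges_of_empty_single)
      ultimately show ?thesis by blast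
    qed
  next
    case False
    define CC where "CC = comp ` S"
    have finCC: "finite CC" unfolding CC_def using fS by simp
    have CCsub: "\<forall>C\<in>CC. C \<subset> S" using False comp_sub unfolding CC_def by blast
    have CCne: "\<forall>C\<in>CC. C \<noteq> {}" unfolding CC_def using comp_self by blast
    have US: "\<Union>CC = S" unfolding CC_def using comp_sub comp_self by blast
    have dis: "\<forall>A\<in>CC. \<forall>B\<in>CC. A \<noteq> B \<longrightarrow> A \<inter> B = {}"
      unfolding CC_def using comp_eq by blast
    have connC: "conn c C M" if CinCC: "C \<in> CC" for C
    proof -
      obtain a where a: "a \<in> S" "C = comp a" using CinCC CC_def by blast
      show ?thesis unfolding conn_def
      proof (intro ballI)
        fix u v assume u: "u \<in> C" and v: "v \<in> C"
        have "(u,a) \<in> rel\<^sup>*" "(a,v) \<in> rel\<^sup>*" using u v a symr by (auto simp: comp_def dest: symD)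
        then have uv: "(u,v) \<in> rel\<^sup>*" by (rule rtrancl_trans)
        have "(u,v) \<in> (rel \<inter> C \<times> C)\<^sup>*"
          using rtrancl_restrict[OF uv u] comp_closed a by blast
        moreover have "rel \<inter> C \<times> C \<subseteq> ltr c C M" unfolding rel_def ltr_def by auto
        ultimately show "(u,v) \<in> (ltr c C M)\<^sup>*" using rtrancl_mono by blast
      qed
    qed
    have "\<forall>C\<in>CC. \<exists>T. is_tree C T \<and> cost c T \<le> Zsum c y C + (real (card C) - 1 - Ysum y C) * M"
    proof
      fix C assume C: "C \<in> CC"
      have "card C < card S" using CCsub C fS psubset_card_mono by blast
      then show "\<exists>T. is_tree C T \<and> cost c T \<le> Zsum c y C + (real (card C) - 1 - Ysum y C) * M"
        using IH CCsub C SR CCne connC by blast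
    qed
    then obtain T where T: "\<forall>C\<in>CC. is_tree C (T C) \<and> cost c (T C) \<le> Zsum c y C + (real (card C) - 1 - Ysum y C) * M"
      by metis
    have ltrS: "ltr c S M \<subseteq> S \<times> S" "\<forall>(a,b)\<in>ltr c S M. c {a,b} \<le> M" unfolding ltr_def by auto
    have "CC \<noteq> {}" unfolding CC_def using Sne by simp
    then have k1: "card CC \<ge> 1" using finCC by (simp add: Suc_le_eq card_gt_0_iff)
    obtain F where F: "is_tree S F" "cost c F \<le> (\<Sum>C\<in>CC. cost c (T C)) + (real (card CC) - 1) * M"
      using merge_family[OF finCC refl k1 US CCne dis _ _ ltrS(1) ltrS(2)] T less.prems(2)
      unfolding conn_def by blast
    have fC: "\<forall>C\<in>CC. finite C" using CCsub fS finite_subset by blast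
    have cardS: "(\<Sum>C\<in>CC. real (card C)) = real (card S)"
    proof -
      have "card S = (\<Sum>C\<in>CC. card C)" using card_Union_disjoint[of CC] US dis fC
        unfolding pairwise_def disjnt_def by metis
      then show ?thesis by simp
    qed
    define X where "X = (\<Union>C\<in>CC. edges_of C)"
    have XS: "X \<subseteq> edges_of S" unfolding X_def using CCsub edges_of_mono by blast
    have finES: "finite (edges_of S)" using finite_edges_of[OF fS] .
    have disE: "\<forall>A\<in>CC. \<forall>B\<in>CC. A \<noteq> B \<longrightarrow> edges_of A \<inter> edges_of B = {}"
    proof (intro ballI impI)
      fix A B assume "A \<in> CC" "B \<in> CC" "A \<noteq> B"
      then have "A \<inter> B = {}" using dis by blast
      then show "edges_of A \<inter> edges_of B = {}" by (auto elim!: edges_ofE simp: doubleton_eq_iff)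
    qed
    have finEC: "\<forall>C\<in>CC. finite (edges_of C)" using fC finite_edges_of by blast
    have sumX: "(\<Sum>e\<in>X. g e) = (\<Sum>C\<in>CC. \<Sum>e\<in>edges_of C. g e)" for g :: "'a set \<Rightarrow> real"
      unfolding X_def by (rule sum.UNION_disjoint[OF finCC finEC disE])
    have cross: "M \<le> c e" if eSX: "e \<in> edges_of S - X" for e
    proof (rule ccontr)
      assume "\<not> M \<le> c e"
      obtain a b where e: "e = {a,b}" "a \<in> S" "b \<in> S" "a \<noteq> b" using eSX by (auto elim: edges_ofE)
      then have "(a,b) \<in> rel" unfolding rel_def using \<open>\<not> M \<le> c e\<close> by auto
      then have "b \<in> comp a" by (simp add: comp_def)
      then have "e \<in> edges_of (comp a)" using e comp_self by (simp add: in_edges_of)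
      then have "e \<in> X" unfolding X_def CC_def using e by blast
      then show False using eSX by blast
    qed
    have yS: "\<forall>e\<in>edges_of S. 0 \<le> y e" using ynn edges_of_mono[OF SR] by blast
    have splitY: "Ysum y S = (\<Sum>C\<in>CC. Ysum y C) + (\<Sum>e\<in>edges_of S - X. y e)"
      unfolding Ysum_def using sumX[of y] sum.subset_diff[OF XS finES, of y] by simp
    have splitZ: "Zsum c y S = (\<Sum>C\<in>CC. Zsum c y C) + (\<Sum>e\<in>edges_of S - X. y e * c e)"
      unfolding Zsum_def using sumX[of "\<lambda>e. y e * c e"] sum.subset_diff[OF XS finES, of "\<lambda>e. y e * c e"] by simp
    have crossZ: "(\<Sum>e\<in>edges_of S - X. y e) * M \<le> (\<Sum>e\<in>edges_of S - X. y e * c e)"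
      unfolding sum_distrib_right by (rule sum_mono) (use cross yS in \<open>auto intro: mult_left_mono\<close>)
    have "(\<Sum>C\<in>CC. cost c (T C)) \<le> (\<Sum>C\<in>CC. Zsum c y C + (real (card C) - 1 - Ysum y C) * M)"
      using T by (intro sum_mono) auto
    also have "\<dots> = (\<Sum>C\<in>CC. Zsum c y C) + ((\<Sum>C\<in>CC. real (card C)) - real (card CC) - (\<Sum>C\<in>CC. Ysum y C)) * M"
      by (simp add: sum.distrib sum_subtractf algebra_simps sum_distrib_left sum_distrib_right)
    finally have A: "(\<Sum>C\<in>CC. cost c (T C)) \<le> (\<Sum>C\<in>CC. Zsum c y C) + (real (card S) - real (card CC) - (\<Sum>C\<in>CC. Ysum y C)) * M"
      using cardS by simp
    have "cost c F \<le> Zsum c y S + (real (card S) - 1 - Ysum y S) * M"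
      using F(2) A splitY splitZ crossZ by (simp add: algebra_simps)
    then show ?thesis using F(1) by blast
  qed
qed



lemma subtour:
  fixes R :: "'a set" and y c :: "'a set \<Rightarrow> real"
  assumes fR: "finite R"
    and ynn: "\<forall>e\<in>edges_of R. 0 \<le> y e"
    and cons: "\<forall>S. S \<subseteq> R \<and> S \<noteq> {} \<longrightarrow> Ysum y S \<le> real (card S) - 1"
  shows "S \<subseteq> R \<Longrightarrow> S \<noteq> {} \<Longrightarrow> conn c S M \<Longrightarrow>
       \<exists>T. is_tree S T \<and> cost c T \<le> Zsum c y S + (real (card S) - 1 - Ysum y S) * M"
proof (induction "card S" arbitrary: S M rule: less_induct)
  case less
  show ?case
    by (rule subtour_step[OF less.prems(1,2) fR ynn cons less.hyps refl less.prems(3)])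
qed

fun pc :: "('a set \<Rightarrow> real) \<Rightarrow> 'a list \<Rightarrow> real" where
  "pc c (a # b # L) = c {a,b} + pc c (b # L)"
| "pc c _ = 0"

fun pedges :: "'a list \<Rightarrow> 'a set set" where
  "pedges (a # b # L) = insert {a,b} (pedges (b # L))"
| "pedges _ = {}"

lemma pedges_sub: "pedges L \<subseteq> Pow (set L)"
  by (induction L rule: pedges.induct) auto

lemma finite_pedges: "finite (pedges L)"
  by (induction L rule: pedges.induct) auto

lemma pedges_edges: "distinct L \<Longrightarrow> set L \<subseteq> W \<Longrightarrow> pedges L \<subseteq> edges_of W"
  by (induction L rule: pedges.induct) (auto simp: in_edges_of)

lemma ab_notin_pedges: "a \<notin> set L \<Longrightarrow> {a,b} \<notin> pedges L"
  using pedges_sub by blast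

lemma cost_pedges: "distinct L \<Longrightarrow> cost c (pedges L) = pc c L"
proof (induction L rule: pedges.induct)
  case (1 a b L)
  have "{a,b} \<notin> pedges (b # L)" using 1(2) ab_notin_pedges[of a "b # L" b] by auto
  then show ?case using 1 finite_pedges[of "b # L"] by (simp add: cost_def)
qed (auto simp: cost_def)

lemma card_pedges: "distinct L \<Longrightarrow> card (pedges L) = length L - 1"
proof (induction L rule: pedges.induct)
  case (1 a b L)
  have "{a,b} \<notin> pedges (b # L)" using 1(2) ab_notin_pedges[of a "b # L" b] by auto
  then show ?case using 1 finite_pedges[of "b # L"] by simp
qed auto

lemma count_pedges:
  "distinct L \<Longrightarrow> card {e \<in> pedges L. e \<subseteq> S} \<le> card (set L \<inter> S) - 1"
proof (induction L rule: pedges.induct)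
  case (1 a b L)
  let ?A = "{e \<in> pedges (b # L). e \<subseteq> S}"
  have IH: "card ?A \<le> card (set (b # L) \<inter> S) - 1" using 1 by simp
  have an: "a \<notin> set (b # L)" using 1(2) by simp
  have fA: "finite ?A" using finite_pedges[of "b # L"] by simp
  show ?case
  proof (cases "{a,b} \<subseteq> S")
    case True
    have eq: "{e \<in> pedges (a # b # L). e \<subseteq> S} = insert {a,b} ?A" using True by auto
    have c1: "card (set (a # b # L) \<inter> S) = Suc (card (set (b # L) \<inter> S))"
      using True an by (simp add: insert_absorb Int_insert_left)
    have c2: "card (set (b # L) \<inter> S) \<ge> 1"
      using True by (simp add: Suc_le_eq card_gt_0_iff)
    have c3: "card (insert {a,b} ?A) \<le> Suc (card ?A)" using fA by (simp add: card_insert_if)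
    show ?thesis unfolding eq using c1 c2 c3 IH by linarith
  next
    case False
    have eq: "{e \<in> pedges (a # b # L). e \<subseteq> S} = ?A" using False by auto
    have "card (set (b # L) \<inter> S) \<le> card (set (a # b # L) \<inter> S)"
      by (rule card_mono) auto
    then have "card (set (b # L) \<inter> S) - 1 \<le> card (set (a # b # L) \<inter> S) - 1"
      by (rule diff_le_mono)
    then show ?thesis unfolding eq using IH by linarith
  qed
qed auto

lemma shortcut:
  fixes c :: "'a set \<Rightarrow> real"
  assumes tri: "\<And>u v w. u \<in> V \<Longrightarrow> v \<in> V \<Longrightarrow> w \<in> V \<Longrightarrow> u \<noteq> v \<Longrightarrow> v \<noteq> w \<Longrightarrow> u \<noteq> w \<Longrightarrow>
           c {u, w} \<le> c {u, v} + c {v, w}"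
    and nn: "\<And>e. e \<in> edges_of V \<Longrightarrow> 0 \<le> c e"
  shows "distinct (a # L) \<Longrightarrow> set (a # L) \<subseteq> V \<Longrightarrow> pc c (a # filter P L) \<le> pc c (a # L)"
proof (induction L arbitrary: a)
  case Nil then show ?case by simp
next
  case (Cons b L)
  show ?case
  proof (cases "P b")
    case True
    have "pc c (b # filter P L) \<le> pc c (b # L)" using Cons by simp
    then show ?thesis using True by simp
  next
    case False
    have IH: "pc c (a # filter P L) \<le> pc c (a # L)" using Cons by simp
    have "pc c (a # L) \<le> c {a,b} + pc c (b # L)"
    proof (cases L)
      case Nil
      have "{a,b} \<in> edges_of V" using Cons.prems by (simp add: in_edges_of)
      then show ?thesis using Nil nn by simp
    next
      case (Cons d L')
      have "c {a,d} \<le> c {a,b} + c {b,d}" using Cons \<open>distinct (a # b # L)\<close> \<open>set (a # b # L) \<subseteq> V\<close>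
        by (intro tri) auto
      then show ?thesis using Cons by simp
    qed
    then show ?thesis using IH False by simp
  qed
qed



lemma tree_finite: "is_tree W F \<Longrightarrow> finite W \<and> finite F \<and> F \<subseteq> edges_of W"
  unfolding is_tree_def using finite_edges_of finite_subset by blast

lemma handshake:
  assumes fW: "finite W" and FW: "F \<subseteq> edges_of W"
  shows "(\<Sum>v\<in>W. deg F v) = 2 * card F"
proof -
  have fF: "finite F" using FW finite_edges_of[OF fW] finite_subset by blast
  have "(\<Sum>v\<in>W. deg F v) = (\<Sum>v\<in>W. \<Sum>e\<in>F. if v \<in> e then 1 else 0)"
  proof (rule sum.cong)
    fix v assume "v \<in> W"
    have "deg F v = (\<Sum>e\<in>{e\<in>F. v \<in> e}. 1)" unfolding deg_def by (rule card_eq_sum)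
    also have "\<dots> = (\<Sum>e\<in>F. if v \<in> e then 1 else 0)" by (rule sum.inter_filter[OF fF])
    finally show "deg F v = (\<Sum>e\<in>F. if v \<in> e then 1 else 0)" .
  qed simp
  also have "\<dots> = (\<Sum>e\<in>F. \<Sum>v\<in>W. if v \<in> e then 1 else 0)" by (rule sum.swap)
  also have "\<dots> = (\<Sum>e\<in>F. 2)"
  proof (rule sum.cong)
    fix e assume "e \<in> F"
    then have eW: "e \<in> edges_of W" using FW by blast
    then obtain a b where ab: "e = {a,b}" "a \<in> W" "b \<in> W" "a \<noteq> b" by (rule edges_ofE)
    have "(\<Sum>v\<in>W. if v \<in> e then 1 else 0) = (\<Sum>v\<in>{v\<in>W. v \<in> e}. 1::nat)"
      by (rule sum.inter_filter[OF fW, symmetric])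
    also have "{v\<in>W. v \<in> e} = {a,b}" using ab by auto
    finally show "(\<Sum>v\<in>W. if v \<in> e then 1 else 0) = (2::nat)" using ab by simp
  qed simp
  finally show ?thesis by simp
qed

lemma deg_pos:
  assumes T: "is_tree W F" and c2: "2 \<le> card W" and v: "v \<in> W"
  shows "1 \<le> deg F v"
proof -
  have fW: "finite W" and fF: "finite F" using tree_finite[OF T] by auto
  have "W - {v} \<noteq> {}"
  proof
    assume "W - {v} = {}" then have "W = {v}" using v by blast
    then show False using c2 by simp
  qed
  then obtain w where w: "w \<in> W" "w \<noteq> v" by blast
  have "(v,w) \<in> (adj F)\<^sup>*" using T v w unfolding is_tree_def by blast
  then obtain z where "(v,z) \<in> adj F" using w(2) by (cases rule: converse_rtranclE) auto
  then have "{v,z} \<in> {e\<in>F. v \<in> e}" by (simp add: adj_def)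
  then have "{e\<in>F. v \<in> e} \<noteq> {}" by blast
  then show ?thesis unfolding deg_def using fF by (simp add: Suc_le_eq card_gt_0_iff)
qed

lemma tree_leaf:
  assumes T: "is_tree W F" and c2: "2 \<le> card W" and r: "r \<in> W"
  shows "\<exists>v\<in>W. v \<noteq> r \<and> deg F v = 1"
proof (rule ccontr)
  assume no: "\<not> (\<exists>v\<in>W. v \<noteq> r \<and> deg F v = 1)"
  have fW: "finite W" and FW: "F \<subseteq> edges_of W" and cF: "card F = card W - 1"
    using T unfolding is_tree_def by auto
  have ge2: "2 \<le> deg F v" if "v \<in> W - {r}" for v
    using deg_pos[OF T c2] no that by fastforce
  have "(\<Sum>v\<in>W. deg F v) = deg F r + (\<Sum>v\<in>W - {r}. deg F v)"
    using fW r by (simp add: sum.remove)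
  moreover have "(\<Sum>v\<in>W - {r}. deg F v) \<ge> (\<Sum>v\<in>W - {r}. 2)"
    by (rule sum_mono) (use ge2 in auto)
  moreover have "deg F r \<ge> 1" using deg_pos[OF T c2 r] .
  moreover have "card (W - {r}) = card W - 1" using fW r by simp
  ultimately have "(\<Sum>v\<in>W. deg F v) \<ge> 1 + 2 * (card W - 1)" by simp
  then show False using handshake[OF fW FW] cF c2 by simp
qed

lemma leaf_edge:
  assumes T: "is_tree W F" and d: "deg F v = 1"
  obtains u where "{u,v} \<in> F" "u \<noteq> v" "u \<in> W" "\<forall>e\<in>F. v \<in> e \<longrightarrow> e = {u,v}"
proof -
  have FW: "F \<subseteq> edges_of W" using T unfolding is_tree_def by auto
  obtain e where e: "{e'\<in>F. v \<in> e'} = {e}" using d unfolding deg_def by (rule card_1_singletonE)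
  then have eF: "e \<in> F" "v \<in> e" by auto
  have "e \<in> edges_of W" using FW eF by blast
  then obtain a b where ab: "e = {a,b}" "a \<in> W" "b \<in> W" "a \<noteq> b" by (rule edges_ofE)
  define u where "u = (if a = v then b else a)"
  have euv: "e = {u,v}" using ab eF u_def by auto
  have "u \<noteq> v" "u \<in> W" using ab eF u_def by auto
  moreover have "\<forall>e'\<in>F. v \<in> e' \<longrightarrow> e' = {u,v}" using e euv by blast
  ultimately show ?thesis using that eF euv by blast
qed

lemma tree_remove_leaf:
  assumes T: "is_tree W F" and c2: "2 \<le> card W" and v: "v \<in> W"
    and uv: "{u,v} \<in> F" "u \<noteq> v" and uniq: "\<forall>e\<in>F. v \<in> e \<longrightarrow> e = {u,v}"
  shows "is_tree (W - {v}) (F - {{u,v}})"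
proof -
  have fW: "finite W" and fF: "finite F" and FW: "F \<subseteq> edges_of W" using tree_finite[OF T] by auto
  have cF: "card F = card W - 1" and con: "\<forall>x\<in>W. \<forall>y\<in>W. (x,y) \<in> (adj F)\<^sup>*"
    using T unfolding is_tree_def by auto
  let ?F = "F - {{u,v}}"
  have "{u,v} \<in> edges_of W" using uv FW by blast
  then have uW: "u \<in> W" by (simp add: in_edges_of)
  have sub: "?F \<subseteq> edges_of (W - {v})"
  proof
    fix e assume e: "e \<in> ?F"
    have "e \<in> edges_of W" using FW e by blast
    then obtain a b where ab: "e = {a,b}" "a \<in> W" "b \<in> W" "a \<noteq> b" by (rule edges_ofE)
    have "v \<notin> e" using e uniq by blast
    then show "e \<in> edges_of (W - {v})" using ab by (auto simp: in_edges_of)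
  qed
  have card: "card ?F = card (W - {v}) - 1" using cF fF uv fW v c2 by simp
  have step: "(x,z) \<in> (adj F)\<^sup>* \<Longrightarrow> x \<in> W - {v} \<Longrightarrow>
      (z \<noteq> v \<longrightarrow> (x,z) \<in> (adj ?F)\<^sup>*) \<and> (z = v \<longrightarrow> (x,u) \<in> (adj ?F)\<^sup>*)" for x z
  proof (induction rule: rtrancl_induct)
    case base then show ?case by simp
  next
    case (step y z)
    have yz: "{y,z} \<in> F" using step(2) by (simp add: adj_def)
    show ?case
    proof (cases "y = v")
      case True
      then have "{v,z} = {u,v}" using yz uniq by auto
      then have "z = u" using uv(2) by (auto simp: doubleton_eq_iff)
      then show ?thesis using step True uv(2) by auto
    next
      case yv: False
      show ?thesis
      proof (cases "z = v")
        case True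
        then have "{y,v} = {u,v}" using yz uniq by auto
        then have "y = u" using uv(2) yv by (auto simp: doubleton_eq_iff)
        then show ?thesis using step True yv by auto
      next
        case False
        have "{y,z} \<noteq> {u,v}" using False yv by (auto simp: doubleton_eq_iff)
        then have "(y,z) \<in> adj ?F" using yz by (simp add: adj_def)
        then show ?thesis using step yv False by (meson rtrancl.rtrancl_into_rtrancl)
      qed
    qed
  qed
  have con': "\<forall>x\<in>W - {v}. \<forall>y\<in>W - {v}. (x,y) \<in> (adj ?F)\<^sup>*"
  proof (intro ballI)
    fix x y assume x: "x \<in> W - {v}" and y: "y \<in> W - {v}"
    then have "(x,y) \<in> (adj F)\<^sup>*" using con by blast
    then show "(x,y) \<in> (adj ?F)\<^sup>*" using step[OF _ x] y by blast
  qed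
  show ?thesis unfolding is_tree_def using fW sub card con' by simp
qed



fun ins :: "'a \<Rightarrow> 'a \<Rightarrow> 'a list \<Rightarrow> 'a list" where
  "ins u v [] = []"
| "ins u v (x # xs) = (if x = u then x # v # xs else x # ins u v xs)"

lemma set_ins: "u \<in> set L \<Longrightarrow> set (ins u v L) = insert v (set L)"
  by (induction L) auto

lemma distinct_ins: "distinct L \<Longrightarrow> v \<notin> set L \<Longrightarrow> u \<in> set L \<Longrightarrow> distinct (ins u v L)"
  by (induction L) (auto simp: set_ins)

lemma hd_ins: "L \<noteq> [] \<Longrightarrow> hd (ins u v L) = hd L"
  by (cases L) auto

lemma ins_ne: "L \<noteq> [] \<Longrightarrow> ins u v L \<noteq> []"
  by (cases L) auto

lemma length_ins: "u \<in> set L \<Longrightarrow> length (ins u v L) = Suc (length L)"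
  by (induction L) auto

lemma pc_cons: "ys \<noteq> [] \<Longrightarrow> pc c (x # ys) = c {x, hd ys} + pc c ys"
  by (cases ys) auto

lemma hd_last_distinct: "distinct L \<Longrightarrow> 2 \<le> length L \<Longrightarrow> hd L \<noteq> last L"
proof (cases L)
  case (Cons a L')
  assume d: "distinct L" and l: "2 \<le> length L"
  then have "L' \<noteq> []" using Cons by auto
  then have "last L = last L'" "last L' \<in> set L'" using Cons by auto
  then show ?thesis using Cons d by auto
qed simp

definition cl :: "('a set \<Rightarrow> real) \<Rightarrow> 'a list \<Rightarrow> real" where
  "cl c L = (if 2 \<le> length L then c {last L, hd L} else 0)"

context
  fixes V :: "'a set" and c :: "'a set \<Rightarrow> real"
  assumes tri: "\<And>u v w. u \<in> V \<Longrightarrow> v \<in> V \<Longrightarrow> w \<in> V \<Longrightarrow> u \<noteq> v \<Longrightarrow> v \<noteq> w \<Longrightarrow> u \<noteq> w \<Longrightarrow>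
           c {u, w} \<le> c {u, v} + c {v, w}"
begin

lemma ins_pc:
  shows "distinct L \<Longrightarrow> set L \<subseteq> V \<Longrightarrow> u \<in> set L \<Longrightarrow> v \<in> V \<Longrightarrow> v \<notin> set L \<Longrightarrow>
    (u = last L \<and> pc c (ins u v L) = pc c L + c {u,v} \<and> last (ins u v L) = v) \<or>
    (u \<noteq> last L \<and> pc c (ins u v L) \<le> pc c L + 2 * c {u,v} \<and> last (ins u v L) = last L)"
proof (induction L)
  case Nil then show ?case by simp
next
  case (Cons x xs)
  show ?case
  proof (cases "x = u")
    case True
    show ?thesis
    proof (cases xs)
      case Nil then show ?thesis using True by simp
    next
      case (Cons b xs')
      have "c {v,b} \<le> c {v,u} + c {u,b}"
        using Cons.prems \<open>xs = b # xs'\<close> True by (intro tri) auto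
      moreover have "c {v,u} = c {u,v}" by (simp add: insert_commute)
      moreover have "u \<noteq> last (x # xs)" using Cons.prems True \<open>xs = b # xs'\<close>
        by (metis distinct.simps(2) last.simps last_in_set list.distinct(1))
      ultimately show ?thesis using True \<open>xs = b # xs'\<close> by simp
    qed
  next
    case False
    then have uxs: "u \<in> set xs" using Cons.prems by simp
    then have xsne: "xs \<noteq> []" by auto
    have IH: "(u = last xs \<and> pc c (ins u v xs) = pc c xs + c {u,v} \<and> last (ins u v xs) = v) \<or>
      (u \<noteq> last xs \<and> pc c (ins u v xs) \<le> pc c xs + 2 * c {u,v} \<and> last (ins u v xs) = last xs)"
      using Cons uxs by simp
    have e1: "ins u v (x # xs) = x # ins u v xs" using False by simp
    have e2: "pc c (x # ins u v xs) = c {x, hd xs} + pc c (ins u v xs)"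
      using pc_cons[OF ins_ne[OF xsne]] hd_ins[OF xsne] by simp
    have e3: "pc c (x # xs) = c {x, hd xs} + pc c xs" using pc_cons[OF xsne] .
    have e4: "last (x # ins u v xs) = last (ins u v xs)" using ins_ne[OF xsne] by simp
    have e5: "last (x # xs) = last xs" using xsne by simp
    show ?thesis unfolding e1 e2 e3 e4 e5 using IH by auto
  qed
qed


lemma ham:
  shows "is_tree W F \<Longrightarrow> W \<subseteq> V \<Longrightarrow> r \<in> W \<Longrightarrow>
    \<exists>L. distinct L \<and> set L = W \<and> hd L = r \<and> pc c L + cl c L \<le> 2 * cost c F"
proof (induction "card W" arbitrary: W F rule: less_induct)
  case less
  have T: "is_tree W F" and WV: "W \<subseteq> V" and r: "r \<in> W" using less.prems by auto
  have fW: "finite W" and fF: "finite F" and FW: "F \<subseteq> edges_of W" using tree_finite[OF T] by auto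
  show ?case
  proof (cases "card W \<ge> 2")
    case False
    have "card W \<noteq> 0" using r fW by auto
    then have "card W = 1" using False by linarith
    then obtain z where "W = {z}" by (rule card_1_singletonE)
    then have Wr: "W = {r}" using r by simp
    then have "F = {}" using FW by (simp add: edges_of_empty_single)
    then show ?thesis using Wr by (intro exI[of _ "[r]"]) (simp add: cl_def cost_def)
  next
    case True
    obtain v where v: "v \<in> W" "v \<noteq> r" "deg F v = 1" using tree_leaf[OF T True r] by blast
    obtain u where uv: "{u,v} \<in> F" "u \<noteq> v" "u \<in> W" and uniq: "\<forall>e\<in>F. v \<in> e \<longrightarrow> e = {u,v}"
      using leaf_edge[OF T v(3)] by blast
    let ?W = "W - {v}" and ?F = "F - {{u,v}}"
    have T': "is_tree ?W ?F" by (rule tree_remove_leaf[OF T True v(1) uv(1,2) uniq])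
    have cW: "card ?W < card W" using fW v(1) True by simp
    have W'V: "?W \<subseteq> V" using WV by blast
    have rW: "r \<in> ?W" using r v(2) by blast
    obtain L' where L': "distinct L'" "set L' = ?W" "hd L' = r" "pc c L' + cl c L' \<le> 2 * cost c ?F"
      using less.hyps[OF cW T' W'V rW] by blast
    have costF: "cost c F = cost c ?F + c {u,v}"
      unfolding cost_def using fF uv(1) by (simp add: sum.remove)
    have uL: "u \<in> set L'" using L'(2) uv by simp
    have vL: "v \<notin> set L'" using L'(2) by simp
    have rL: "r \<in> set L'" using L'(2) rW by simp
    then have L'ne: "L' \<noteq> []" by (cases L') auto
    have L'V: "set L' \<subseteq> V" using L'(2) WV by auto
    have vV: "v \<in> V" using v WV by auto
    define L where "L = ins u v L'"
    have dL: "distinct L" unfolding L_def by (rule distinct_ins[OF L'(1) vL uL])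
    have sL: "set L = W" unfolding L_def using set_ins[OF uL] L'(2) v(1) by auto
    have hL: "hd L = r" unfolding L_def using hd_ins[OF L'ne] L'(3) by simp
    have lenL: "length L = Suc (length L')" unfolding L_def by (rule length_ins[OF uL])
    have "pc c L + cl c L \<le> pc c L' + cl c L' + 2 * c {u,v}"
      using ins_pc[OF L'(1) L'V uL vV vL]
    proof (elim disjE conjE)
      assume ul: "u = last L'" and pcL: "pc c (ins u v L') = pc c L' + c {u, v}" and ll: "last (ins u v L') = v"
      have clL: "cl c L = c {v, r}" unfolding cl_def using lenL ll hL L'ne L_def
        by (cases L') auto
      show ?thesis
      proof (cases "2 \<le> length L'")
        case True
        have ur: "u \<noteq> r" using hd_last_distinct[OF L'(1) True] ul L'(3) by simp
        have "c {v,r} \<le> c {v,u} + c {u,r}"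
          using ur v(2) uv(2) vV L'V uL L'ne L'(3) hd_in_set[OF L'ne] by (intro tri) auto
        moreover have "cl c L' = c {u, r}" unfolding cl_def using True ul L'(3) by simp
        moreover have "c {v,u} = c {u,v}" by (simp add: insert_commute)
        ultimately show ?thesis using clL pcL L_def by simp
      next
        case False
        then have "length L' = 1" using L'ne by (cases L') (auto simp: Suc_le_eq)
        then have "L' = [r]" using L'(3) L'ne by (cases L') auto
        then have "u = r" using uL by simp
        then show ?thesis using clL pcL L_def \<open>L' = [r]\<close> by (simp add: cl_def insert_commute)
      qed
    next
      assume ul: "u \<noteq> last L'" and pcL: "pc c (ins u v L') \<le> pc c L' + 2 * c {u, v}"
        and ll: "last (ins u v L') = last L'"
      have "2 \<le> length L'"
      proof (rule ccontr)
        assume "\<not> 2 \<le> length L'"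
        then have "length L' = 1" using L'ne by (cases L') (auto simp: Suc_le_eq)
        then obtain z where "L' = [z]" by (cases L') auto
        then show False using ul uL by simp
      qed
      then have "cl c L = cl c L'" unfolding cl_def using lenL ll hL L'(3) L_def by simp
      then show ?thesis using pcL L_def by simp
    qed
    then have "pc c L + cl c L \<le> 2 * cost c F" using L'(4) costF by simp
    then show ?thesis using dL sL hL by blast
  qed
qed

end



lemma Ysum_formula:
  assumes fI: "finite I" and PR: "\<forall>K\<in>I. pedges (P K) \<subseteq> edges_of R" and SR: "S \<subseteq> R" and fR: "finite R"
  shows "Ysum (\<lambda>e. \<Sum>K\<in>I. x K * of_bool (e \<in> pedges (P K))) S
       = (\<Sum>K\<in>I. x K * real (card {e \<in> pedges (P K). e \<subseteq> S}))"
proof -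
  have fS: "finite (edges_of S)" using finite_edges_of SR fR finite_subset by blast
  have "Ysum (\<lambda>e. \<Sum>K\<in>I. x K * of_bool (e \<in> pedges (P K))) S
      = (\<Sum>K\<in>I. \<Sum>e\<in>edges_of S. x K * of_bool (e \<in> pedges (P K)))"
    unfolding Ysum_def by (rule sum.swap)
  also have "\<dots> = (\<Sum>K\<in>I. x K * (\<Sum>e\<in>edges_of S. of_bool (e \<in> pedges (P K))))"
    by (simp add: sum_distrib_left)
  also have "\<dots> = (\<Sum>K\<in>I. x K * real (card {e \<in> pedges (P K). e \<subseteq> S}))"
  proof (rule sum.cong)
    fix K assume K: "K \<in> I"
    have "(\<Sum>e\<in>edges_of S. of_bool (e \<in> pedges (P K))) = real (card (edges_of S \<inter> {e. e \<in> pedges (P K)}))"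
      using fS by simp
    also have "edges_of S \<inter> {e. e \<in> pedges (P K)} = {e \<in> pedges (P K). e \<subseteq> S}"
    proof
      show "edges_of S \<inter> {e. e \<in> pedges (P K)} \<subseteq> {e \<in> pedges (P K). e \<subseteq> S}"
        using edges_of_sub by blast
      show "{e \<in> pedges (P K). e \<subseteq> S} \<subseteq> edges_of S \<inter> {e. e \<in> pedges (P K)}"
      proof
        fix e assume e: "e \<in> {e \<in> pedges (P K). e \<subseteq> S}"
        then have "e \<in> edges_of R" using PR K by blast
        then obtain a b where "e = {a,b}" "a \<noteq> b" by (rule edges_ofE)
        then show "e \<in> edges_of S \<inter> {e. e \<in> pedges (P K)}" using e by (auto simp: in_edges_of)
      qed
    qed
    finally show "x K * (\<Sum>e\<in>edges_of S. of_bool (e \<in> pedges (P K))) = x K * real (card {e \<in> pedges (P K). e \<subseteq> S})"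
      by simp
  qed simp
  finally show ?thesis .
qed

lemma Zsum_formula:
  assumes fI: "finite I" and PR: "\<forall>K\<in>I. pedges (P K) \<subseteq> edges_of R" and fR: "finite R"
  shows "Zsum c (\<lambda>e. \<Sum>K\<in>I. x K * of_bool (e \<in> pedges (P K))) R
       = (\<Sum>K\<in>I. x K * cost c (pedges (P K)))"
proof -
  have fS: "finite (edges_of R)" using finite_edges_of fR by blast
  have "Zsum c (\<lambda>e. \<Sum>K\<in>I. x K * of_bool (e \<in> pedges (P K))) R
      = (\<Sum>e\<in>edges_of R. \<Sum>K\<in>I. x K * (c e * of_bool (e \<in> pedges (P K))))"
    unfolding Zsum_def sum_distrib_right by (simp add: mult_ac)
  also have "\<dots> = (\<Sum>K\<in>I. \<Sum>e\<in>edges_of R. x K * (c e * of_bool (e \<in> pedges (P K))))"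
    by (rule sum.swap)
  also have "\<dots> = (\<Sum>K\<in>I. x K * (\<Sum>e\<in>edges_of R. c e * of_bool (e \<in> pedges (P K))))"
    by (simp add: sum_distrib_left)
  also have "\<dots> = (\<Sum>K\<in>I. x K * cost c (pedges (P K)))"
  proof (rule sum.cong)
    fix K assume K: "K \<in> I"
    have "(\<Sum>e\<in>edges_of R. c e * of_bool (e \<in> pedges (P K))) = (\<Sum>e\<in>edges_of R \<inter> {e. e \<in> pedges (P K)}. c e)"
      using fS by simp
    also have "edges_of R \<inter> {e. e \<in> pedges (P K)} = pedges (P K)" using PR K by blast
    finally show "x K * (\<Sum>e\<in>edges_of R. c e * of_bool (e \<in> pedges (P K))) = x K * cost c (pedges (P K))"
      by (simp add: cost_def)
  qed simp
  finally show ?thesis .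
qed

lemma fc_path:
  fixes V R :: "'a set" and c :: "'a set \<Rightarrow> real"
  assumes fV: "finite V"
    and nn: "\<And>e. e \<in> edges_of V \<Longrightarrow> 0 \<le> c e"
    and tri: "\<And>u v w. u \<in> V \<Longrightarrow> v \<in> V \<Longrightarrow> w \<in> V \<Longrightarrow> u \<noteq> v \<Longrightarrow> v \<noteq> w \<Longrightarrow> u \<noteq> w \<Longrightarrow>
           c {u, w} \<le> c {u, v} + c {v, w}"
    and K: "K \<in> lp_index V R"
  shows "\<exists>P. distinct P \<and> set P = K \<and> pc c P \<le> 2 * fc_cost V R c K"
proof -
  have K2: "2 \<le> card K" and hf: "has_full_component V R K" using K unfolding lp_index_def by auto
  define A where "A = {cost c F | W F. full_component V R K W F}"
  have "A \<subseteq> cost c ` Pow (edges_of V)"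
  proof
    fix a assume "a \<in> A"
    then obtain W F where a: "a = cost c F" and fc: "full_component V R K W F" unfolding A_def by blast
    have "W \<subseteq> V" "F \<subseteq> edges_of W" using fc unfolding full_component_def is_tree_def by auto
    then have "F \<subseteq> edges_of V" using edges_of_mono by blast
    then show "a \<in> cost c ` Pow (edges_of V)" using a by blast
  qed
  then have fA: "finite A" using finite_edges_of[OF fV] finite_subset by blast
  have neA: "A \<noteq> {}" using hf unfolding has_full_component_def A_def by blast
  have "fc_cost V R c K \<in> A" unfolding fc_cost_def A_def[symmetric] using fA neA by (rule Min_in)
  then obtain W F where fc: "full_component V R K W F" and cF: "cost c F = fc_cost V R c K"
    unfolding A_def by auto
  have WV: "W \<subseteq> V" and T: "is_tree W F" and KW: "K = {v \<in> W. deg F v = 1}"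
    using fc unfolding full_component_def by auto
  have "K \<noteq> {}" using K2 by auto
  then obtain k0 where k0: "k0 \<in> K" by blast
  have k0W: "k0 \<in> W" using k0 KW by blast
  have "\<exists>L. distinct L \<and> set L = W \<and> hd L = k0 \<and> pc c L + cl c L \<le> 2 * cost c F"
    by (rule ham[of V c, OF tri T WV k0W])
  then obtain L where L: "distinct L" "set L = W" "hd L = k0" "pc c L + cl c L \<le> 2 * cost c F" by blast
  have Lne: "L \<noteq> []" using L(2) k0W by auto
  then obtain L0 where L0: "L = k0 # L0" using L(3) by (cases L) auto
  have LV: "set L \<subseteq> V" using L(2) WV by simp
  have dk: "distinct (k0 # L0)" using L(1) L0 by simp
  define P where "P = k0 # filter (\<lambda>z. z \<in> K) L0"
  have dP: "distinct P" unfolding P_def using dk by auto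
  have sP: "set P = K"
  proof -
    have "set L0 = W - {k0}" using L(2) L0 dk by auto
    then show ?thesis unfolding P_def using k0 KW by auto
  qed
  have "pc c P \<le> pc c (k0 # L0)"
    unfolding P_def using shortcut[of V c, OF tri nn, of k0 L0 "\<lambda>z. z \<in> K"] dk LV L0 by simp
  then have "pc c P \<le> pc c L" using L0 by simp
  moreover have "0 \<le> cl c L"
  proof (cases "2 \<le> length L")
    case True
    have "hd L \<noteq> last L" by (rule hd_last_distinct[OF L(1) True])
    moreover have "hd L \<in> V" "last L \<in> V" using LV Lne by auto
    ultimately have "{last L, hd L} \<in> edges_of V" by (auto simp: in_edges_of)
    then show ?thesis unfolding cl_def using True nn by simp
  qed (simp add: cl_def)
  ultimately have "pc c P \<le> 2 * fc_cost V R c K" using L(4) cF by simp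
  then show ?thesis using dP sP by blast
qed



theorem lemma2:
  fixes V R :: "'a set" and c :: "'a set \<Rightarrow> real" and x :: "'a set \<Rightarrow> real"
  assumes "finite V"
    and "R \<subseteq> V"
    and "\<And>e. e \<in> edges_of V \<Longrightarrow> 0 \<le> c e"
    and "\<And>u v w. u \<in> V \<Longrightarrow> v \<in> V \<Longrightarrow> w \<in> V \<Longrightarrow> u \<noteq> v \<Longrightarrow> v \<noteq> w \<Longrightarrow> u \<noteq> w \<Longrightarrow>
           c {u, w} \<le> c {u, v} + c {v, w}"
    and "hyp_feasible V R x"
  shows "mst_cost R c \<le> 2 * hyp_objective V R c x"
proof -
  note fV = assms(1) and RV = assms(2) and nn = assms(3) and tri = assms(4) and feas = assms(5)
  have fR: "finite R" using fV RV finite_subset by blast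
  define I where "I = lp_index V R"
  have IR: "\<forall>K\<in>I. K \<subseteq> R \<and> 2 \<le> card K" unfolding I_def lp_index_def by auto
  have fI: "finite I" using IR fR by (intro finite_subset[of I "Pow R"]) auto
  have xnn: "\<forall>K\<in>I. 0 \<le> x K" using feas unfolding hyp_feasible_def I_def by blast
  have LPS: "\<forall>S. S \<subseteq> R \<and> S \<noteq> {} \<longrightarrow>
        (\<Sum>K\<in>{K \<in> I. K \<inter> S \<noteq> {}}. x K * (real (card (K \<inter> S)) - 1)) \<le> real (card S) - 1"
    using feas unfolding hyp_feasible_def I_def by blast
  have LPE: "(\<Sum>K\<in>I. x K * (real (card K) - 1)) = real (card R) - 1"
    using feas unfolding hyp_feasible_def I_def by blast
  have "\<forall>K\<in>I. \<exists>P. distinct P \<and> set P = K \<and> pc c P \<le> 2 * fc_cost V R c K"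
    using fc_path[of V c, OF fV nn tri] unfolding I_def by blast
  then obtain P where P: "\<forall>K\<in>I. distinct (P K) \<and> set (P K) = K \<and> pc c (P K) \<le> 2 * fc_cost V R c K"
    by metis
  have PR: "\<forall>K\<in>I. pedges (P K) \<subseteq> edges_of R"
    using P IR pedges_edges by metis
  define y where "y e = (\<Sum>K\<in>I. x K * of_bool (e \<in> pedges (P K)))" for e
  have yeq: "y = (\<lambda>e. \<Sum>K\<in>I. x K * of_bool (e \<in> pedges (P K)))" unfolding y_def by simp
  have ynn: "\<forall>e\<in>edges_of R. 0 \<le> y e"
    unfolding y_def using xnn by (auto intro!: sum_nonneg)
  have Yf: "Ysum y S = (\<Sum>K\<in>I. x K * real (card {e \<in> pedges (P K). e \<subseteq> S}))" if "S \<subseteq> R" for S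
    unfolding yeq by (rule Ysum_formula[OF fI PR that fR])
  have cons: "\<forall>S. S \<subseteq> R \<and> S \<noteq> {} \<longrightarrow> Ysum y S \<le> real (card S) - 1"
  proof (intro allI impI)
    fix S assume S: "S \<subseteq> R \<and> S \<noteq> {}"
    have "Ysum y S \<le> (\<Sum>K\<in>I. x K * real (card (K \<inter> S) - 1))"
      unfolding Yf[OF conjunct1[OF S]]
    proof (rule sum_mono)
      fix K assume K: "K \<in> I"
      have "card {e \<in> pedges (P K). e \<subseteq> S} \<le> card (set (P K) \<inter> S) - 1"
        using count_pedges P K by blast
      then have "real (card {e \<in> pedges (P K). e \<subseteq> S}) \<le> real (card (K \<inter> S) - 1)"
        using P K by simp
      then show "x K * real (card {e \<in> pedges (P K). e \<subseteq> S}) \<le> x K * real (card (K \<inter> S) - 1)"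
        using xnn K by (intro mult_left_mono) auto
    qed
    also have "\<dots> = (\<Sum>K\<in>I. if K \<inter> S \<noteq> {} then x K * (real (card (K \<inter> S)) - 1) else 0)"
    proof (rule sum.cong)
      fix K assume K: "K \<in> I"
      have fK: "finite K" using K IR fR finite_subset by blast
      show "x K * real (card (K \<inter> S) - 1) = (if K \<inter> S \<noteq> {} then x K * (real (card (K \<inter> S)) - 1) else 0)"
      proof (cases "K \<inter> S = {}")
        case True then show ?thesis by simp
      next
        case False
        then have "card (K \<inter> S) \<ge> 1" using fK by (simp add: Suc_le_eq card_gt_0_iff)
        then show ?thesis using False by (simp add: of_nat_diff)
      qed
    qed simp
    also have "\<dots> = (\<Sum>K\<in>{K \<in> I. K \<inter> S \<noteq> {}}. x K * (real (card (K \<inter> S)) - 1))"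
      by (rule sum.inter_filter[OF fI, symmetric])
    also have "\<dots> \<le> real (card S) - 1" using LPS S by blast
    finally show "Ysum y S \<le> real (card S) - 1" .
  qed
  have YR: "Ysum y R = real (card R) - 1"
  proof -
    have "Ysum y R = (\<Sum>K\<in>I. x K * real (card {e \<in> pedges (P K). e \<subseteq> R}))" using Yf by simp
    also have "\<dots> = (\<Sum>K\<in>I. x K * (real (card K) - 1))"
    proof (rule sum.cong)
      fix K assume K: "K \<in> I"
      have "{e \<in> pedges (P K). e \<subseteq> R} = pedges (P K)" using PR K edges_of_sub by blast
      moreover have "card (pedges (P K)) = card K - 1"
        using card_pedges[of "P K"] P K distinct_card[of "P K"] by simp
      moreover have "card K \<ge> 2" using IR K by blast
      ultimately show "x K * real (card {e \<in> pedges (P K). e \<subseteq> R}) = x K * (real (card K) - 1)"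
        by (simp add: of_nat_diff)
    qed simp
    finally show ?thesis using LPE by simp
  qed
  have ZR: "Zsum c y R \<le> 2 * hyp_objective V R c x"
  proof -
    have "Zsum c y R = (\<Sum>K\<in>I. x K * cost c (pedges (P K)))"
      unfolding yeq by (rule Zsum_formula[OF fI PR fR])
    also have "\<dots> \<le> (\<Sum>K\<in>I. x K * (2 * fc_cost V R c K))"
    proof (rule sum_mono)
      fix K assume K: "K \<in> I"
      have "cost c (pedges (P K)) = pc c (P K)" using cost_pedges P K by blast
      then have "cost c (pedges (P K)) \<le> 2 * fc_cost V R c K" using P K by simp
      then show "x K * cost c (pedges (P K)) \<le> x K * (2 * fc_cost V R c K)"
        using xnn K by (intro mult_left_mono) auto
    qed
    also have "\<dots> = 2 * hyp_objective V R c x"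
      unfolding hyp_objective_def I_def[symmetric] by (simp add: sum_distrib_left mult_ac)
    finally show ?thesis .
  qed
  have Rne: "R \<noteq> {}"
  proof
    assume "R = {}"
    then have "I = {}" using IR by fastforce
    then show False using LPE \<open>R = {}\<close> by simp
  qed
  define M where "M = Max (insert 0 (c ` edges_of R))"
  have fE: "finite (edges_of R)" using finite_edges_of[OF fR] .
  have cM: "c e \<le> M" if "e \<in> edges_of R" for e
    unfolding M_def using fE that by (intro Max_ge) auto
  have conR: "conn c R M"
    unfolding conn_def
  proof (intro ballI)
    fix u v assume u: "u \<in> R" and v: "v \<in> R"
    show "(u,v) \<in> (ltr c R M)\<^sup>*"
    proof (cases "u = v")
      case True then show ?thesis by simp
    next
      case False
      then have "{u,v} \<in> edges_of R" using u v by (simp add: in_edges_of)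
      then have "(u,v) \<in> ltr c R M" unfolding ltr_def using u v False cM by auto
      then show ?thesis by (rule r_into_rtrancl)
    qed
  qed
  obtain T where T: "is_tree R T" "cost c T \<le> Zsum c y R + (real (card R) - 1 - Ysum y R) * M"
    using subtour[OF fR ynn cons, of R c M] Rne conR by blast
  have cT: "cost c T \<le> Zsum c y R" using T(2) YR by simp
  have "finite {cost c F | F. is_tree R F}"
  proof (rule finite_subset[of _ "cost c ` Pow (edges_of R)"])
    show "{cost c F | F. is_tree R F} \<subseteq> cost c ` Pow (edges_of R)"
      unfolding is_tree_def by blast
  qed (use fE in simp)
  then have "mst_cost R c \<le> cost c T" unfolding mst_cost_def using T(1) by (intro Min_le) auto
  then show ?thesis using cT ZR by simp
qed



end
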